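(* Let $C_1 = [0,1] \setminus \left(\frac{1}{3}, \frac{2}{3}\right)$ and for $i \geq 2$ let $C_i = \frac{1}{3} C_{i-1} \cup \left(\frac{2}{3} + \frac{1}{3} C_{i-1}\right)$. Then $M_{C_i} = (0,1)$ for all integers $i \geq 1$.
   Context: For a set $A \subset \mathbb{R}$, the midpoint set of $A$ is $M_A := \left\{\frac{x+y}{2} : x, y \in A,\ x \neq y\right\}$. For $c \in \mathbb{R}$ and $A \subset \mathbb{R}$, $cA = \{ca : a \in A\}$ and $c + A = \{c + a : a \in A\}$. *)

theory Defs
  imports "HOL-Analysis.Analysis"
begin

definition midpoint_set :: "real set \<Rightarrow> real set" where
  "midpoint_set A = {(x + y) / 2 | x y. x \<in> A \<and> y \<in> A \<and> x \<noteq> y}"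

text \<open>C 1 = [0,1] minus (1/3,2/3); C i = (1/3) C (i-1) union (2/3 + (1/3) C (i-1)) for i >= 2.
  The value at index 0 is irrelevant (set to the empty set).\<close>
fun cantorC :: "nat \<Rightarrow> real set" where
  "cantorC 0 = {}"
| "cantorC (Suc 0) = {0..1} - {1/3<..<2/3}"
| "cantorC (Suc (Suc n)) =
     ((\<lambda>a. (1/3) * a) ` cantorC (Suc n)) \<union> ((\<lambda>a. 2/3 + a) ` ((\<lambda>a. (1/3) * a) ` cantorC (Suc n)))"

end

theory Submission
  imports Defs
begin

lemma cC_sub: "cantorC (Suc n) \<subseteq> {0..1}"
proof (induction n)
  case 0 then show ?case by auto
next
  case (Suc n)
  show ?case using Suc by (auto simp del: cantorC.simps simp add: cantorC.simps(3))
qed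

lemma cC_01: "0 \<in> cantorC (Suc n) \<and> 1 \<in> cantorC (Suc n)"
proof (induction n)
  case 0 then show ?case by auto
next
  case (Suc n)
  have "(0::real) = (1/3) * 0" by simp
  moreover have "(1::real) = 2/3 + (1/3) * 1" by simp
  ultimately show ?case using Suc by (simp only: cantorC.simps(3)) blast
qed

lemma cC_sum: "0 < t \<Longrightarrow> t < 2 \<Longrightarrow> \<exists>x\<in>cantorC (Suc n). \<exists>y\<in>cantorC (Suc n). x \<noteq> y \<and> x + y = (t::real)"
proof (induction n arbitrary: t)
  case 0
  note pr = 0
  have C: "cantorC (Suc 0) = {0..1} - {1/3<..<2/3}" by simp
  show ?case
  proof (cases "t \<le> 1/3")
    case True show ?thesis apply (rule bexI[of _ 0], rule bexI[of _ t]) using True pr by (auto simp: C)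
  next
    case f1: False
    show ?thesis
    proof (cases "t < 2/3")
      case True show ?thesis apply (rule bexI[of _ "1/3"], rule bexI[of _ "t-1/3"]) using True f1 pr by (auto simp: C)
    next
      case f2: False
      show ?thesis
      proof (cases "t \<le> 1")
        case True show ?thesis apply (rule bexI[of _ 0], rule bexI[of _ t]) using True f2 pr by (auto simp: C)
      next
        case f3: False
        show ?thesis
        proof (cases "t \<le> 4/3")
          case True show ?thesis apply (rule bexI[of _ 1], rule bexI[of _ "t-1"]) using True f3 pr by (auto simp: C)
        next
          case f4: False
          show ?thesis
          proof (cases "t < 5/3")
            case True show ?thesis apply (rule bexI[of _ "2/3"], rule bexI[of _ "t-2/3"]) using True f4 pr by (auto simp: C)
          next
            case False show ?thesis apply (rule bexI[of _ 1], rule bexI[of _ "t-1"]) using False pr by (auto simp: C)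
          qed
        qed
      qed
    qed
  qed
next
  case (Suc n)
  define C where "C = cantorC (Suc n)"
  have D: "cantorC (Suc (Suc n)) = ((\<lambda>a. (1/3) * a) ` C) \<union> ((\<lambda>a. 2/3 + a) ` ((\<lambda>a. (1/3) * a) ` C))"
    unfolding C_def by (simp only: cantorC.simps(3))
  have z: "0 \<in> C" and o: "1 \<in> C" using cC_01[of n] unfolding C_def by auto
  have L: "(1/3) * a \<in> cantorC (Suc (Suc n))" if "a \<in> C" for a using that D by auto
  have R: "2/3 + (1/3) * a \<in> cantorC (Suc (Suc n))" if "a \<in> C" for a using that D by auto
  show ?case
  proof (cases "t < 2/3")
    case True
    then obtain x y where "x \<in> C" "y \<in> C" "x \<noteq> y" "x + y = 3*t"
      using Suc.IH[of "3*t"] Suc.prems unfolding C_def by auto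
    then show ?thesis by (intro bexI[OF _ L[of x]] bexI[OF _ L[of y]]) auto
  next
    case f1: False
    show ?thesis
    proof (cases "t = 2/3")
      case True show ?thesis apply (rule bexI[of _ 0], rule bexI[of _ "2/3"]) using True L[OF z] R[OF z] by auto
    next
      case f2: False
      show ?thesis
      proof (cases "t < 4/3")
        case True
        then obtain x y where "x \<in> C" "y \<in> C" "x \<noteq> y" "x + y = 3*t - 2"
          using Suc.IH[of "3*t-2"] f1 f2 unfolding C_def by auto
        moreover have "(1/3)*x \<le> 1/3" "(1/3)*y \<ge> 0" using \<open>x \<in> C\<close> \<open>y \<in> C\<close> cC_sub[of n] unfolding C_def by auto
        ultimately show ?thesis by (intro bexI[OF _ L[of x]] bexI[OF _ R[of y]]) auto
      next
        case f3: False
        show ?thesis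
        proof (cases "t = 4/3")
          case True show ?thesis apply (rule bexI[of _ "1/3"], rule bexI[of _ "2/3 + 1/3*1"]) using True L[OF o] R[OF o] by auto
        next
          case False
          then obtain x y where "x \<in> C" "y \<in> C" "x \<noteq> y" "x + y = 3*t - 4"
            using Suc.IH[of "3*t-4"] f3 Suc.prems unfolding C_def by auto
          then show ?thesis by (intro bexI[OF _ R[of x]] bexI[OF _ R[of y]]) auto
        qed
      qed
    qed
  qed
qed

theorem theorem2p6:
  fixes i :: nat
  assumes "i \<ge> 1"
  shows "midpoint_set (cantorC i) = {0<..<1}"
proof -
  obtain n where i: "i = Suc n" using assms by (cases i) auto
  show ?thesis
  proof
    show "midpoint_set (cantorC i) \<subseteq> {0<..<1}"
    proof
      fix m assume "m \<in> midpoint_set (cantorC i)"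
      then obtain x y where "x \<in> cantorC i" "y \<in> cantorC i" "x \<noteq> y" "m = (x+y)/2"
        unfolding midpoint_set_def by auto
      moreover have "x \<in> {0..1}" "y \<in> {0..1}" using calculation cC_sub[of n] i by auto
      ultimately show "m \<in> {0<..<1}" by auto
    qed
  next
    show "{0<..<1} \<subseteq> midpoint_set (cantorC i)"
    proof
      fix m :: real assume "m \<in> {0<..<1}"
      then obtain x y where "x \<in> cantorC i" "y \<in> cantorC i" "x \<noteq> y" "x + y = 2*m"
        using cC_sum[of "2*m" n] i by auto
      then show "m \<in> midpoint_set (cantorC i)" unfolding midpoint_set_def
        by (intro CollectI exI[of _ x] exI[of _ y]) auto
    qed
  qed
qed

end
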